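(* Let $X$ be a finite set. For each $x\in X$ there is a homomorphism $\rho_x:\mathbb{A}_X\to\mathbb{A}_X$ satisfying \[ \rho_x(a_{u,v})=\sum_{y\in X}a_{yu,xv} \] for all $u,v\in X^n$, $n\ge 0$.
   Context: For $n\geq 0$, $X^n$ is the set of words of length $n$ in $X$, with $X^0=\{\varnothing\}$; juxtaposition denotes concatenation of words. $\mathbb{A}_X$ is the universal $C^*$-algebra generated by elements $\{a_{u,v}: u,v\in X^n,\ n\geq 0\}$ subject to: (i) $a_{\varnothing,\varnothing}=1$; (ii) $a_{u,v}^*=a_{u,v}^2=a_{u,v}$; (iii) for all $n\geq0$, $u,v\in X^n$, $x\in X$: $a_{u,v}=\sum_{y\in X}a_{ux,vy}=\sum_{z\in X}a_{uz,vx}$. "Homomorphism" means $*$-homomorphism of $C^*$-algebras. *)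

theory Defs
  imports Complex_Main
begin

text \<open>Complex unital C*-algebras, encoded on a real unital Banach algebra type 'a,
  with involution st and a distinguished central element j playing the role of i*1.
  Complex scalar multiplication is c . x = Re c x + Im c (j x).\<close>

definition cscale :: "'a::real_normed_algebra_1 \<Rightarrow> complex \<Rightarrow> 'a \<Rightarrow> 'a" where
  "cscale j c x = Re c *\<^sub>R x + Im c *\<^sub>R (j * x)"

definition cstar_algebra :: "('a::{real_normed_algebra_1,banach} \<Rightarrow> 'a) \<Rightarrow> 'a \<Rightarrow> bool" where
  "cstar_algebra st j \<longleftrightarrow>
     j * j = - 1 \<and> (\<forall>x. j * x = x * j) \<and>
     (\<forall>c x. norm (cscale j c x) = cmod c * norm x) \<and>
     (\<forall>x. st (st x) = x) \<and>
     (\<forall>x y. st (x + y) = st x + st y) \<and>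
     (\<forall>r x. st (r *\<^sub>R x) = r *\<^sub>R st x) \<and>
     st j = - j \<and>
     (\<forall>x y. st (x * y) = st y * st x) \<and>
     (\<forall>x. norm (st x * x) = (norm x)\<^sup>2)"

definition star_hom ::
  "('a::{real_normed_algebra_1,banach} \<Rightarrow> 'a) \<Rightarrow> 'a \<Rightarrow>
   ('b::{real_normed_algebra_1,banach} \<Rightarrow> 'b) \<Rightarrow> 'b \<Rightarrow> ('a \<Rightarrow> 'b) \<Rightarrow> bool" where
  "star_hom st j st' j' f \<longleftrightarrow>
     (\<forall>x y. f (x + y) = f x + f y) \<and>
     (\<forall>c x. f (cscale j c x) = cscale j' c (f x)) \<and>
     (\<forall>x y. f (x * y) = f x * f y) \<and>
     (\<forall>x. f (st x) = st' (f x))"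

definition word_pair :: "'x set \<Rightarrow> 'x list \<Rightarrow> 'x list \<Rightarrow> bool" where
  "word_pair X u v \<longleftrightarrow> set u \<subseteq> X \<and> set v \<subseteq> X \<and> length u = length v"

definition AX_rel :: "'x set \<Rightarrow> ('a::{real_normed_algebra_1,banach} \<Rightarrow> 'a) \<Rightarrow>
    ('x list \<Rightarrow> 'x list \<Rightarrow> 'a) \<Rightarrow> bool" where
  "AX_rel X st b \<longleftrightarrow>
     b [] [] = 1 \<and>
     (\<forall>u v. word_pair X u v \<longrightarrow>
        st (b u v) = b u v \<and> b u v * b u v = b u v \<and>
        (\<forall>x\<in>X. b u v = (\<Sum>y\<in>X. b (u @ [x]) (v @ [y])) \<and>
                b u v = (\<Sum>z\<in>X. b (u @ [z]) (v @ [x]))))"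

text \<open>(st, j, a) is a universal C*-algebra for the relations of A_X (universal property
  tested against C*-algebras on the same carrier type).\<close>
definition universal_AX :: "'x set \<Rightarrow> ('a::{real_normed_algebra_1,banach} \<Rightarrow> 'a) \<Rightarrow> 'a \<Rightarrow>
    ('x list \<Rightarrow> 'x list \<Rightarrow> 'a) \<Rightarrow> bool" where
  "universal_AX X st j a \<longleftrightarrow>
     cstar_algebra st j \<and> AX_rel X st a \<and>
     (\<forall>(st' :: 'a \<Rightarrow> 'a) j' b. cstar_algebra st' j' \<and> AX_rel X st' b \<longrightarrow>
        (\<exists>!f. star_hom st j st' j' f \<and> (\<forall>u v. word_pair X u v \<longrightarrow> f (a u v) = b u v)))"

end

theory Submission imports Defs begin

definition Emb :: "'a::real_normed_algebra_1 \<Rightarrow> complex \<Rightarrow> 'a" where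
  "Emb j c = Re c *\<^sub>R 1 + Im c *\<^sub>R j"

lemma le1_from_pow:
  fixes c :: real
  assumes "0 \<le> c" and h: "\<And>k. c ^ (2 ^ k) \<le> 2"
  shows "c \<le> 1"
proof (rule ccontr)
  assume "\<not> c \<le> 1"
  hence c1: "c > 1" by simp
  obtain n :: nat where n: "1 / (c - 1) < n" using reals_Archimedean2 by blast
  have "real n < real (2 ^ n)" by (simp only: of_nat_less_iff less_exp)
  hence "1 < real (2^n) * (c - 1)" using n c1
    by (smt (verit, ccfv_SIG) divide_less_eq mult_strict_right_mono)
  moreover have "1 + real (2^n) * (c - 1) \<le> (1 + (c - 1)) ^ (2^n)"
    using Bernoulli_inequality[of "c - 1" "2^n"] c1 by simp
  ultimately have "c ^ (2^n) > 2" by simp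
  with h[of n] show False by simp
qed

locale cstar =
  fixes st :: "'a::{real_normed_algebra_1,banach} \<Rightarrow> 'a" and j :: 'a
  assumes cs: "cstar_algebra st j"
begin

lemma jj: "j * j = - 1" and jc: "j * x = x * j"
  and nc: "norm (cscale j c x) = cmod c * norm x"
  and ss: "st (st x) = x" and sadd: "st (x + y) = st x + st y"
  and sscale: "st (r *\<^sub>R x) = r *\<^sub>R st x" and sj: "st j = - j"
  and smul: "st (x * y) = st y * st x" and cst: "norm (st x * x) = (norm x)\<^sup>2"
  using cs unfolding cstar_algebra_def by blast+

lemma s0: "st 0 = 0" using sscale[of 0 0] by simp
lemma sneg: "st (- x) = - st x" using sscale[of "-1" x] by simp
lemma sminus: "st (x - y) = st x - st y" using sadd[of x "-y"] sneg by simp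
lemma s1: "st 1 = 1"
proof -
  have "st (st 1 * 1) = st 1 * st (st 1)" by (rule smul)
  thus ?thesis by (simp add: ss)
qed
lemma ssum: "st (sum f A) = (\<Sum>i\<in>A. st (f i))"
  by (induction A rule: infinite_finite_induct) (auto simp: s0 sadd)

lemma proj_norm: assumes "st p = p" "p * p = p" shows "norm p \<le> 1"
proof -
  have "norm p = (norm p)\<^sup>2" using cst[of p] assms by simp
  thus ?thesis by (smt (verit) norm_ge_zero power2_eq_square mult_le_cancel_left2)
qed

lemma sa_sq: assumes "st z = z" shows "norm (z * z) = (norm z)\<^sup>2"
  using cst[of z] assms by simp

lemma spow: "st (x ^ n) = (st x) ^ n"
  by (induction n) (auto simp: s1 smul power_commutes)

lemma sa_pow2: assumes "st y = y" shows "norm (y ^ (2 ^ k)) = norm y ^ (2 ^ k)"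
proof (induction k)
  case 0 then show ?case by simp
next
  case (Suc k)
  have "y ^ (2 ^ Suc k) = y ^ (2^k) * y ^ (2^k)"
    by (simp add: power_add[symmetric] mult_2)
  moreover have "st (y ^ (2^k)) = y ^ (2^k)" by (simp add: spow assms)
  ultimately have "norm (y ^ (2 ^ Suc k)) = (norm (y ^ (2^k)))\<^sup>2" using sa_sq by simp
  also have "\<dots> = norm y ^ (2 ^ Suc k)" using Suc by (simp add: power_mult[symmetric] mult.commute)
  finally show ?case .
qed

lemma orth_sum_norm:
  assumes pp: "st p = p" "p * p = p" and X: "st X = X" "p * X = 0" "X * p = 0" "norm X \<le> 1"
  shows "norm (p + X) \<le> 1"
proof -
  let ?A = "p + X"
  have sA: "st ?A = ?A" using pp X by (simp add: sadd)
  have pw: "?A ^ Suc n = p + X ^ Suc n" for n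
  proof (induction n)
    case 0 then show ?case by simp
  next
    case (Suc n)
    have "?A ^ Suc (Suc n) = ?A * (p + X ^ Suc n)" using Suc by (simp only: power_Suc)
    also have "\<dots> = p * p + p * X ^ Suc n + X * p + X * X ^ Suc n" by (simp add: algebra_simps)
    also have "p * X ^ Suc n = 0" by (simp add: mult.assoc[symmetric] X)
    finally show ?case using pp X by simp
  qed
  have "norm ?A ^ (2^k) \<le> 2" for k
  proof -
    have "norm ?A ^ (2^k) = norm (?A ^ (2^k))" using sa_pow2[OF sA] by simp
    also have "?A ^ (2^k) = p + X ^ (2^k)" using pw[of "2^k - 1"] by simp
    also have "norm (p + X ^ (2^k)) \<le> norm p + norm (X ^ (2^k))" by (rule norm_triangle_ineq)
    also have "norm (X ^ (2^k)) \<le> norm X ^ (2^k)" by (rule norm_power_ineq)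
    also have "norm X ^ (2^k) \<le> 1" using X by (simp add: power_le_one)
    finally show ?thesis using proj_norm[OF pp] by simp
  qed
  thus ?thesis using le1_from_pow by simp
qed


lemma one_minus_pqp:
  assumes p: "st p = p" "p * p = p" and q: "st q = q" "q * q = q"
  shows "norm (1 - p * q * p) \<le> 1"
proof -
  let ?P = "1 - p" and ?X = "p * (1 - q) * p"
  have e: "1 - p * q * p = ?P + ?X" using p by (simp add: algebra_simps)
  have P1: "st ?P = ?P" using p by (simp add: sminus s1)
  have P2: "?P * ?P = ?P" using p by (simp add: algebra_simps)
  have X1: "st ?X = ?X" using p q by (simp add: smul sminus s1 mult.assoc)
  have pp1: "(1 - p) * p = 0" "p * (1 - p) = 0" using p by (simp_all add: algebra_simps)
  have "?P * ?X = ((1 - p) * p) * ((1 - q) * p)" by (simp only: mult.assoc)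
  hence X2: "?P * ?X = 0" using pp1 by simp
  have "?X * ?P = (p * (1 - q)) * (p * (1 - p))" by (simp only: mult.assoc)
  hence X3: "?X * ?P = 0" using pp1 by simp
  have Q1: "st (1 - q) = 1 - q" using q by (simp add: sminus s1)
  have Q2: "(1 - q) * (1 - q) = 1 - q" using q by (simp add: algebra_simps)
  have "norm ?X \<le> norm (p * (1 - q)) * norm p" by (rule norm_mult_ineq)
  also have "\<dots> \<le> (norm p * norm (1 - q)) * norm p"
    by (intro mult_right_mono norm_mult_ineq) simp
  also have "\<dots> \<le> 1" using proj_norm[OF p] proj_norm[OF Q1 Q2]
    by (simp add: mult_le_one)
  finally have X4: "norm ?X \<le> 1" .
  show ?thesis unfolding e by (rule orth_sum_norm[OF P1 P2 X1 X2 X3 X4])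
qed

lemma comb: "a *\<^sub>R (1 + u) + b *\<^sub>R (1 - u) = (a + b) *\<^sub>R 1 + (a - b) *\<^sub>R (u::'a)"
  by (simp add: algebra_simps)

lemma convex1:
  fixes u :: 'a
  assumes "norm (1 + u) \<le> 1" "norm (1 - u) \<le> 1" "\<bar>t\<bar> \<le> 1"
  shows "norm (1 + t *\<^sub>R u) \<le> 1"
proof -
  have r: "(1 + t) / 2 + (1 - t) / 2 = (1::real)" "(1 + t) / 2 - (1 - t) / 2 = (t::real)"
    by (simp_all add: field_simps)
  have e: "1 + t *\<^sub>R u = ((1 + t) / 2) *\<^sub>R (1 + u) + ((1 - t) / 2) *\<^sub>R (1 - u)"
    using comb[of "(1 + t) / 2" u "(1 - t) / 2"] r by simp
  have "norm (1 + t *\<^sub>R u) \<le> \<bar>(1 + t) / 2\<bar> * norm (1 + u) + \<bar>(1 - t) / 2\<bar> * norm (1 - u)"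
    unfolding e by (metis norm_scaleR norm_triangle_ineq)
  also have "\<dots> \<le> \<bar>(1 + t) / 2\<bar> * 1 + \<bar>(1 - t) / 2\<bar> * 1"
    by (intro add_mono mult_left_mono assms) auto
  also have "\<dots> = 1" using assms(3) r(1) by auto
  finally show ?thesis .
qed

lemma Emb_mult_left: "Emb j c * x = Re c *\<^sub>R x + Im c *\<^sub>R (j * x)"
  by (simp add: Emb_def algebra_simps)
lemma Emb_comm: "Emb j c * x = x * Emb j c"
proof -
  have "x * Emb j c = Re c *\<^sub>R x + Im c *\<^sub>R (x * j)" by (simp add: Emb_def algebra_simps)
  thus ?thesis by (simp add: Emb_mult_left jc[of x])
qed
lemma Emb_add: "Emb j (c + d) = Emb j c + Emb j d"
  by (simp add: Emb_def algebra_simps)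
lemma Emb_zero: "Emb j 0 = 0" by (simp add: Emb_def)
lemma Emb_mult: "Emb j (c * d) = Emb j c * Emb j d"
  by (simp add: Emb_def algebra_simps jj)
lemma Emb_norm: "norm (Emb j c * x) = cmod c * norm x"
  using nc[of c x] by (simp add: Emb_mult_left cscale_def)
lemma Emb_real: "Emb j (complex_of_real r) * x = r *\<^sub>R x"
  by (simp add: Emb_mult_left)

lemma Gzero:
  assumes sg: "st g = g" and g1: "norm (1 + g) \<le> 1" and g2: "norm (1 - g) \<le> 1"
  shows "g = 0"
proof -
  have sq: "norm (w * w) \<le> 1" if "norm w \<le> 1" for w :: 'a
    using norm_mult_ineq[of w w] that by (smt (verit) mult_le_one norm_ge_zero)
  have "2 *\<^sub>R (1 + g * g) = (1 + g) * (1 + g) + (1 - g) * (1 - g)"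
    by (simp add: algebra_simps scaleR_2)
  hence "norm (2 *\<^sub>R (1 + g * g)) \<le> 2"
    using norm_triangle_ineq[of "(1 + g) * (1 + g)" "(1 - g) * (1 - g)"] sq[OF g1] sq[OF g2]
    by simp
  hence gg: "norm (1 + g * g) \<le> 1" by simp
  have sjg: "st (j * g) = - (j * g)" by (simp add: smul sj sg jc)
  have jgjg: "j * g * (j * g) = - (g * g)"
  proof -
    have "j * g * (j * g) = (j * j) * (g * g)" by (simp add: mult.assoc jc[of g] ) (metis jc mult.assoc)
    thus ?thesis by (simp add: jj)
  qed
  have jg1: "norm (1 + j * g) \<le> 1"
  proof -
    have "st (1 + j * g) = 1 - j * g" by (simp add: sadd s1 sjg)
    moreover have "(1 - j * g) * (1 + j * g) = 1 - j * g * (j * g)" by (simp add: algebra_simps)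
    ultimately have "st (1 + j * g) * (1 + j * g) = 1 + g * g" by (simp add: jgjg)
    hence "(norm (1 + j * g))\<^sup>2 \<le> 1" using cst[of "1 + j * g"] gg by simp
    thus ?thesis by (simp add: power_le_one_iff)
  qed
  have jg2: "norm (1 - j * g) \<le> 1"
  proof -
    have "st (1 - j * g) = 1 + j * g" by (simp add: sminus s1 sjg)
    moreover have "(1 + j * g) * (1 - j * g) = 1 - j * g * (j * g)" by (simp add: algebra_simps)
    ultimately have "st (1 - j * g) * (1 - j * g) = 1 + g * g" by (simp add: jgjg)
    hence "(norm (1 - j * g))\<^sup>2 \<le> 1" using cst[of "1 - j * g"] gg by simp
    thus ?thesis by (simp add: power_le_one_iff)
  qed
  define D where "D \<rho> \<longleftrightarrow> (\<forall>z. cmod z \<le> \<rho> \<longrightarrow> norm (1 + Emb j z * g) \<le> 1)" for \<rho>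
  have D0: "D (1/2)" unfolding D_def
  proof (intro allI impI)
    fix z :: complex assume z: "cmod z \<le> 1/2"
    have a: "\<bar>2 * Re z\<bar> \<le> 1" "\<bar>2 * Im z\<bar> \<le> 1"
      using abs_Re_le_cmod[of z] abs_Im_le_cmod[of z] z by auto
    have e: "2 *\<^sub>R (1 + Emb j z * g) = (1 + (2 * Re z) *\<^sub>R g) + (1 + (2 * Im z) *\<^sub>R (j * g))"
      by (simp add: Emb_mult_left algebra_simps scaleR_2)
    have "norm (2 *\<^sub>R (1 + Emb j z * g)) \<le> norm (1 + (2 * Re z) *\<^sub>R g) + norm (1 + (2 * Im z) *\<^sub>R (j * g))"
      unfolding e by (rule norm_triangle_ineq)
    also have "\<dots> \<le> 1 + 1"
      by (intro add_mono convex1 a g1 g2 jg1 jg2)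
    finally show "norm (1 + Emb j z * g) \<le> 1" by simp
  qed
  have Dstep: "D (sqrt 2 * \<rho>)" if "D \<rho>" for \<rho>
    unfolding D_def
  proof (intro allI impI)
    fix z :: complex assume z: "cmod z \<le> sqrt 2 * \<rho>"
    define w where "w = z / (1 + \<i>)"
    have c: "cmod (1 + \<i>) = sqrt 2" by (simp add: cmod_def)
    have w1: "cmod w \<le> \<rho>" using z unfolding w_def by (simp add: norm_divide c divide_le_eq mult.commute)
    have w2: "cmod (\<i> * w) \<le> \<rho>" using w1 by (simp add: norm_mult)
    have nz: "1 + \<i> \<noteq> 0" by (simp add: complex_eq_iff)
    have "z = (1 + \<i>) * w" unfolding w_def using nz by simp
    hence zw: "z = w + \<i> * w" by (simp add: algebra_simps)
    have ww: "w * w + (\<i> * w) * (\<i> * w) = 0" by (simp add: algebra_simps)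
    have sqE: "(1 + Emb j v * g) * (1 + Emb j v * g) = 1 + 2 *\<^sub>R (Emb j v * g) + Emb j (v * v) * (g * g)" for v
    proof -
      have "Emb j v * g * (Emb j v * g) = Emb j v * (Emb j v * g) * g"
        by (metis Emb_comm mult.assoc)
      also have "\<dots> = Emb j (v * v) * (g * g)" by (simp add: Emb_mult mult.assoc)
      finally show ?thesis by (simp add: algebra_simps scaleR_2)
    qed
    have e: "2 *\<^sub>R (1 + Emb j z * g) = (1 + Emb j w * g) * (1 + Emb j w * g) + (1 + Emb j (\<i> * w) * g) * (1 + Emb j (\<i> * w) * g)"
    proof -
      have z0: "Emb j (w * w) * (g * g) + Emb j ((\<i> * w) * (\<i> * w)) * (g * g) = 0"
        using ww by (metis Emb_add Emb_zero distrib_right mult_zero_left)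
      have z1: "Emb j w * g + Emb j (\<i> * w) * g = Emb j z * g"
        by (simp add: zw Emb_add distrib_right)
      have "(1 + Emb j w * g) * (1 + Emb j w * g) + (1 + Emb j (\<i> * w) * g) * (1 + Emb j (\<i> * w) * g)
         = 2 *\<^sub>R 1 + 2 *\<^sub>R (Emb j w * g + Emb j (\<i> * w) * g) + (Emb j (w * w) * (g * g) + Emb j ((\<i> * w) * (\<i> * w)) * (g * g))"
        unfolding sqE by (simp add: algebra_simps scaleR_2)
      also have "\<dots> = 2 *\<^sub>R (1 + Emb j z * g)" unfolding z0 z1 by (simp add: algebra_simps)
      finally show ?thesis by simp
    qed
    have n1: "norm ((1 + Emb j w * g) * (1 + Emb j w * g)) \<le> 1"
      using sq that w1 unfolding D_def by blast
    have n2: "norm ((1 + Emb j (\<i> * w) * g) * (1 + Emb j (\<i> * w) * g)) \<le> 1"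
      using sq that w2 unfolding D_def by blast
    have "norm (2 *\<^sub>R (1 + Emb j z * g)) \<le> 2" unfolding e
      using norm_triangle_ineq[of "(1 + Emb j w * g) * (1 + Emb j w * g)" "(1 + Emb j (\<i> * w) * g) * (1 + Emb j (\<i> * w) * g)"] n1 n2
      by simp
    thus "norm (1 + Emb j z * g) \<le> 1" by simp
  qed
  have Dk: "D ((1/2) * sqrt 2 ^ k)" for k
  proof (induction k)
    case 0 then show ?case using D0 by simp
  next
    case (Suc k) then show ?case using Dstep[OF Suc] by (simp add: algebra_simps)
  qed
  show "g = 0"
  proof (rule ccontr)
    assume "g \<noteq> 0"
    hence ng: "norm g > 0" by simp
    obtain k where k: "4 / norm g < sqrt 2 ^ k" using real_arch_pow[of "sqrt 2" "4 / norm g"] by auto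
    let ?R = "(1/2) * sqrt 2 ^ k"
    have R0: "?R \<ge> 0" by simp
    have "cmod (complex_of_real ?R) \<le> ?R" using R0 by (simp only: norm_of_real abs_of_nonneg)
    hence "norm (1 + Emb j (complex_of_real ?R) * g) \<le> 1"
      using Dk[of k] unfolding D_def by blast
    hence "norm (1 + ?R *\<^sub>R g) \<le> 1" by (simp only: Emb_real)
    hence "norm (?R *\<^sub>R g) \<le> 2"
      using norm_triangle_ineq4[of "1 + ?R *\<^sub>R g" 1] by simp
    hence "?R * norm g \<le> 2" by simp
    moreover have "?R * norm g > 2" using k ng by (simp add: divide_less_eq)
    ultimately show False by simp
  qed
qed


lemma orth:
  assumes fin: "finite W" and P: "\<forall>w\<in>W. st (P w) = P w \<and> P w * P w = P w"
    and S: "sum P W = 1" and w0: "w0 \<in> W" and w1: "w1 \<in> W" and ne: "w0 \<noteq> w1"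
  shows "P w1 * P w0 = 0"
proof -
  define p where "p = P w0"
  define e where "e w = p * P w * p" for w
  have pp: "st p = p" "p * p = p" using P w0 unfolding p_def by auto
  have "(\<Sum>w\<in>W. e w) = p * sum P W * p" by (simp add: e_def sum_distrib_left sum_distrib_right)
  also have "\<dots> = p" using S pp by simp
  finally have s1: "(\<Sum>w\<in>W. e w) = p" .
  have "(\<Sum>w\<in>W. e w) = e w0 + (\<Sum>w\<in>W-{w0}. e w)" using fin w0 by (simp add: sum.remove)
  moreover have "e w0 = p" using pp by (simp add: e_def p_def[symmetric])
  ultimately have s2: "(\<Sum>w\<in>W-{w0}. e w) = 0" using s1 by simp
  have w1': "w1 \<in> W - {w0}" using w1 ne by simp
  have "(\<Sum>w\<in>W-{w0}. e w) = e w1 + (\<Sum>w\<in>W-{w0}-{w1}. e w)"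
    using fin w1' by (simp add: sum.remove)
  hence s3: "(\<Sum>w\<in>W-{w0}-{w1}. e w) = - e w1" using s2 by (simp add: add_eq_0_iff)
  define N where "N = card (W-{w0}-{w1})"
  have ne1: "norm (1 - e w) \<le> 1" if "w \<in> W" for w
    unfolding e_def using one_minus_pqp[OF pp, of "P w"] P that by auto
  have "(\<Sum>w\<in>W-{w0}-{w1}. (1 - e w)) = of_nat N + e w1"
    by (simp add: sum_subtractf s3 N_def)
  moreover have "norm (\<Sum>w\<in>W-{w0}-{w1}. (1 - e w)) \<le> (\<Sum>w\<in>W-{w0}-{w1}. 1)"
    by (rule sum_norm_le) (use ne1 in auto)
  ultimately have nN: "norm (of_nat N + e w1) \<le> real N" by (simp add: N_def)
  define g where "g = (1 / (real N + 1)) *\<^sub>R e w1"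
  have se: "st (e w1) = e w1" using P w1 pp by (simp add: e_def smul mult.assoc)
  have sg: "st g = g" by (simp add: g_def sscale se)
  have Np: "real N + 1 > 0" by simp
  have eq1: "(real N + 1) *\<^sub>R (1 + g) = (of_nat N + e w1) + 1"
    using Np by (simp add: g_def scaleR_right_distrib of_real_def[symmetric] algebra_simps)
  have eq2: "(real N + 1) *\<^sub>R (1 - g) = of_nat N + (1 - e w1)"
    using Np by (simp add: g_def scaleR_right_diff_distrib of_real_def[symmetric] algebra_simps)
  have "(real N + 1) * norm (1 + g) \<le> real N + 1"
    using eq1 nN norm_triangle_ineq[of "of_nat N + e w1" 1] by (metis norm_scaleR abs_of_pos Np norm_one add_mono order_trans order_refl)
  hence g1: "norm (1 + g) \<le> 1" using Np by simp
  have "(real N + 1) * norm (1 - g) \<le> real N + 1"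
    using eq2 ne1[OF w1] norm_triangle_ineq[of "of_nat N" "1 - e w1"]
    by (metis norm_scaleR abs_of_pos Np norm_of_nat add_mono order_trans order_refl)
  hence g2: "norm (1 - g) \<le> 1" using Np by simp
  have "g = 0" by (rule Gzero[OF sg g1 g2])
  hence e0: "e w1 = 0" unfolding g_def using Np by simp
  have Pw: "st (P w1) = P w1" "P w1 * P w1 = P w1" using P w1 by auto
  have "st (P w1 * p) * (P w1 * p) = p * (P w1 * P w1) * p"
    by (simp add: smul pp(1) Pw(1) mult.assoc)
  also have "\<dots> = e w1" using Pw(2) by (simp add: e_def)
  finally have "(norm (P w1 * p))\<^sup>2 = norm (e w1)" using cst[of "P w1 * p"] by simp
  hence "norm (P w1 * p) = 0" using e0 by simp
  thus ?thesis by (simp add: p_def)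
qed

end

definition words :: "'x set \<Rightarrow> nat \<Rightarrow> 'x list set" where
  "words X m = {w. set w \<subseteq> X \<and> length w = m}"

lemma words_fin: "finite X \<Longrightarrow> finite (words X m)"
  unfolding words_def by (rule finite_lists_length_eq)

lemma words_Suc: "words X (Suc m) = (\<lambda>(w, c). w @ [c]) ` (words X m \<times> X)"
proof
  show "words X (Suc m) \<subseteq> (\<lambda>(w, c). w @ [c]) ` (words X m \<times> X)"
  proof
    fix w' assume h: "w' \<in> words X (Suc m)"
    hence ne: "w' \<noteq> []" by (auto simp: words_def)
    hence e: "w' = butlast w' @ [last w']" by simp
    have "butlast w' \<in> words X m" "last w' \<in> X" using h ne
      by (auto simp: words_def dest: in_set_butlastD)
    thus "w' \<in> (\<lambda>(w, c). w @ [c]) ` (words X m \<times> X)"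
      using e by (intro rev_image_eqI[of "(butlast w', last w')"]) auto
  qed
  show "(\<lambda>(w, c). w @ [c]) ` (words X m \<times> X) \<subseteq> words X (Suc m)"
    by (auto simp: words_def)
qed

lemma sum_words_Suc:
  assumes "finite X"
  shows "(\<Sum>w'\<in>words X (Suc m). f w') = (\<Sum>w\<in>words X m. \<Sum>c\<in>X. f (w @ [c]))"
proof -
  have inj: "inj_on (\<lambda>(w, c). w @ [c]) (words X m \<times> X)" by (auto simp: inj_on_def)
  have "(\<Sum>w'\<in>words X (Suc m). f w') = (\<Sum>(w, c)\<in>words X m \<times> X. f (w @ [c]))"
    unfolding words_Suc by (subst sum.reindex[OF inj]) (simp add: case_prod_beta')
  also have "\<dots> = (\<Sum>w\<in>words X m. \<Sum>c\<in>X. f (w @ [c]))"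
    by (rule sum.cartesian_product[symmetric])
  finally show ?thesis .
qed

lemma rel_expand:
  assumes rel: "AX_rel X st a" and fin: "finite X"
  shows "word_pair X u v \<Longrightarrow> set v' \<subseteq> X \<Longrightarrow>
    a u v = (\<Sum>w\<in>words X (length v'). a (u @ w) (v @ v'))"
proof (induction v' rule: rev_induct)
  case Nil
  have "words X 0 = {[]}" by (auto simp: words_def)
  thus ?case by simp
next
  case (snoc z vs)
  have z: "z \<in> X" and vs: "set vs \<subseteq> X" using snoc.prems by auto
  have IH: "a u v = (\<Sum>w\<in>words X (length vs). a (u @ w) (v @ vs))"
    using snoc.IH snoc.prems vs by blast
  have step: "a (u @ w) (v @ vs) = (\<Sum>c\<in>X. a (u @ w @ [c]) (v @ (vs @ [z])))"
    if w: "w \<in> words X (length vs)" for w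
  proof -
    have "word_pair X (u @ w) (v @ vs)"
      using w snoc.prems vs by (auto simp: words_def word_pair_def)
    hence "a (u @ w) (v @ vs) = (\<Sum>c\<in>X. a ((u @ w) @ [c]) ((v @ vs) @ [z]))"
      using rel z unfolding AX_rel_def by blast
    thus ?thesis by simp
  qed
  have "a u v = (\<Sum>w\<in>words X (length vs). \<Sum>c\<in>X. a (u @ w @ [c]) (v @ (vs @ [z])))"
    using IH step by simp
  also have "\<dots> = (\<Sum>w'\<in>words X (Suc (length vs)). a (u @ w') (v @ (vs @ [z])))"
    using sum_words_Suc[OF fin, of "\<lambda>w'. a (u @ w') (v @ (vs @ [z]))"] by simp
  finally show ?case by simp
qed

theorem proposition4p1:
  fixes X :: "'x set" and st :: "'a::{real_normed_algebra_1,banach} \<Rightarrow> 'a" and j :: 'a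
    and a :: "'x list \<Rightarrow> 'x list \<Rightarrow> 'a" and x :: 'x
  assumes "finite X" and "universal_AX X st j a" and "x \<in> X"
  shows "\<exists>\<rho>. star_hom st j st j \<rho> \<and>
           (\<forall>u v. word_pair X u v \<longrightarrow> \<rho> (a u v) = (\<Sum>y\<in>X. a (y # u) (x # v)))"
proof -
  note fin = assms(1) and xX = assms(3)
  have cs: "cstar_algebra st j" and rel: "AX_rel X st a"
    using assms(2) unfolding universal_AX_def by blast+
  have univ: "\<And>(st' :: 'a \<Rightarrow> 'a) j' b. cstar_algebra st' j' \<Longrightarrow> AX_rel X st' b \<Longrightarrow>
        (\<exists>!f. star_hom st j st' j' f \<and> (\<forall>u v. word_pair X u v \<longrightarrow> f (a u v) = b u v))"
    using assms(2) unfolding universal_AX_def by blast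
  interpret cstar st j by (rule cstar.intro[OF cs])
  have relD: "st (a u v) = a u v" "a u v * a u v = a u v"
    "\<And>x'. x' \<in> X \<Longrightarrow> a u v = (\<Sum>y\<in>X. a (u @ [x']) (v @ [y]))"
    "\<And>x'. x' \<in> X \<Longrightarrow> a u v = (\<Sum>z\<in>X. a (u @ [z]) (v @ [x']))"
    if "word_pair X u v" for u v
  proof -
    have "\<forall>u v. word_pair X u v \<longrightarrow> st (a u v) = a u v \<and> a u v * a u v = a u v \<and>
        (\<forall>x\<in>X. a u v = (\<Sum>y\<in>X. a (u @ [x]) (v @ [y])) \<and> a u v = (\<Sum>z\<in>X. a (u @ [z]) (v @ [x])))"
      using rel unfolding AX_rel_def by (rule conjunct2)
    hence h: "st (a u v) = a u v \<and> a u v * a u v = a u v \<and>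
        (\<forall>x\<in>X. a u v = (\<Sum>y\<in>X. a (u @ [x]) (v @ [y])) \<and> a u v = (\<Sum>z\<in>X. a (u @ [z]) (v @ [x])))"
      using that by blast
    show "st (a u v) = a u v" "a u v * a u v = a u v" using h by simp_all
    have h3: "\<forall>x\<in>X. a u v = (\<Sum>y\<in>X. a (u @ [x]) (v @ [y])) \<and> a u v = (\<Sum>z\<in>X. a (u @ [z]) (v @ [x]))"
      using h by (rule conjunct2[THEN conjunct2])
    show "a u v = (\<Sum>y\<in>X. a (u @ [x']) (v @ [y]))" if "x' \<in> X" for x'
      using bspec[OF h3 that] by (rule conjunct1)
    show "a u v = (\<Sum>z\<in>X. a (u @ [z]) (v @ [x']))" if "x' \<in> X" for x'
      using bspec[OF h3 that] by (rule conjunct2)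
  qed
  have a00: "a [] [] = 1" using rel unfolding AX_rel_def by (rule conjunct1)
  have wp: "word_pair X (y # u) (x # v)" if "word_pair X u v" "y \<in> X" for u v y
    using that xX by (simp add: word_pair_def)
  define b where "b u v = (\<Sum>y\<in>X. a (y # u) (x # v))" for u v
  have b00: "b [] [] = 1"
  proof -
    have "word_pair X [] []" by (simp add: word_pair_def)
    from relD(4)[OF this xX] have "a [] [] = (\<Sum>z\<in>X. a [z] [x])" by simp
    thus ?thesis using a00 by (simp add: b_def)
  qed
  have bst: "st (b u v) = b u v" if uv: "word_pair X u v" for u v
    unfolding b_def ssum by (rule sum.cong) (auto intro: relD(1)[OF wp[OF uv]])
  have bproj: "b u v * b u v = b u v" if uv: "word_pair X u v" for u v
  proof -
    let ?W = "words X (Suc (length u))"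
    let ?P = "\<lambda>w. a w (x # v)"
    have lv: "length v = length u" using uv by (simp add: word_pair_def)
    have PW: "\<forall>w\<in>?W. st (?P w) = ?P w \<and> ?P w * ?P w = ?P w"
    proof
      fix w assume "w \<in> ?W"
      hence "word_pair X w (x # v)" using uv xX lv by (auto simp: words_def word_pair_def)
      thus "st (?P w) = ?P w \<and> ?P w * ?P w = ?P w" using relD by blast
    qed
    have SW: "sum ?P ?W = 1"
    proof -
      have "word_pair X [] []" by (simp add: word_pair_def)
      moreover have "set (x # v) \<subseteq> X" using uv xX by (simp add: word_pair_def)
      ultimately have "a [] [] = (\<Sum>w\<in>words X (length (x # v)). a ([] @ w) ([] @ (x # v)))"
        by (rule rel_expand[OF rel fin])
      thus ?thesis using a00 lv by simp
    qed
    have o: "a (y # u) (x # v) * a (y' # u) (x # v) = 0"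
      if "y \<in> X" "y' \<in> X" "y \<noteq> y'" for y y'
    proof -
      have "y # u \<in> ?W" "y' # u \<in> ?W" using that uv by (auto simp: words_def word_pair_def)
      thus ?thesis using orth[OF words_fin[OF fin] PW SW, of "y' # u" "y # u"] that by auto
    qed
    have "b u v * b u v = (\<Sum>y\<in>X. \<Sum>y'\<in>X. a (y # u) (x # v) * a (y' # u) (x # v))"
      by (simp add: b_def sum_product)
    also have "\<dots> = (\<Sum>y\<in>X. a (y # u) (x # v) * a (y # u) (x # v))"
    proof (rule sum.cong[OF refl])
      fix y assume y: "y \<in> X"
      have "(\<Sum>y'\<in>X. a (y # u) (x # v) * a (y' # u) (x # v))
          = a (y # u) (x # v) * a (y # u) (x # v) + (\<Sum>y'\<in>X - {y}. a (y # u) (x # v) * a (y' # u) (x # v))"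
        using fin y by (simp add: sum.remove)
      also have "(\<Sum>y'\<in>X - {y}. a (y # u) (x # v) * a (y' # u) (x # v)) = 0"
        by (rule sum.neutral) (use o y in auto)
      finally show "(\<Sum>y'\<in>X. a (y # u) (x # v) * a (y' # u) (x # v)) = a (y # u) (x # v) * a (y # u) (x # v)" by simp
    qed
    also have "\<dots> = b u v" unfolding b_def
      by (rule sum.cong) (auto intro: relD(2)[OF wp[OF uv]])
    finally show ?thesis .
  qed
  have brow: "b u v = (\<Sum>y'\<in>X. b (u @ [x']) (v @ [y']))" if uv: "word_pair X u v" and x': "x' \<in> X" for u v x'
  proof -
    have "(\<Sum>y'\<in>X. b (u @ [x']) (v @ [y'])) = (\<Sum>y'\<in>X. \<Sum>y\<in>X. a ((y # u) @ [x']) ((x # v) @ [y']))"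
      unfolding b_def by simp
    also have "\<dots> = (\<Sum>y\<in>X. \<Sum>y'\<in>X. a ((y # u) @ [x']) ((x # v) @ [y']))"
      by (rule sum.swap)
    also have "\<dots> = b u v" unfolding b_def
      by (rule sum.cong[OF refl]) (use relD(3)[OF wp[OF uv] x'] in simp)
    finally show ?thesis by simp
  qed
  have bcol: "b u v = (\<Sum>z\<in>X. b (u @ [z]) (v @ [x']))" if uv: "word_pair X u v" and x': "x' \<in> X" for u v x'
  proof -
    have "(\<Sum>z\<in>X. b (u @ [z]) (v @ [x'])) = (\<Sum>z\<in>X. \<Sum>y\<in>X. a ((y # u) @ [z]) ((x # v) @ [x']))"
      unfolding b_def by simp
    also have "\<dots> = (\<Sum>y\<in>X. \<Sum>z\<in>X. a ((y # u) @ [z]) ((x # v) @ [x']))"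
      by (rule sum.swap)
    also have "\<dots> = b u v" unfolding b_def
      by (rule sum.cong[OF refl]) (use relD(4)[OF wp[OF uv] x'] in simp)
    finally show ?thesis by simp
  qed
  have bAX: "AX_rel X st b" unfolding AX_rel_def
    by (intro conjI allI impI ballI b00; (rule bst bproj brow bcol; assumption))
  have "\<exists>!f. star_hom st j st j f \<and> (\<forall>u v. word_pair X u v \<longrightarrow> f (a u v) = b u v)"
    by (rule univ[OF cs bAX])
  then obtain f where "star_hom st j st j f" "\<forall>u v. word_pair X u v \<longrightarrow> f (a u v) = b u v"
    by blast
  thus ?thesis unfolding b_def by blast
qed

end
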